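(* Let $Q$ be a quiver and $\theta\in\mathbb{Z}^{Q_0}$ with $\nabla(Q,\theta)\ne\emptyset$. Suppose that some vertex $v$ has exactly two arrows $a,b$ attached to it, where $a$ connects $v$ with a vertex $u$ and $b$ connects $v$ with a vertex $w$ ($u,v,w$ distinct), and either both $a,b$ point towards $v$ or both point away from $v$. Let $Q'$ be obtained from $Q$ by replacing $a,b$ by the reversed arrows $\hat a,\hat b$, and let $\theta'\in\mathbb{Z}^{Q'_0}=\mathbb{Z}^{Q_0}$ be given by $\theta'(v)=-\theta(v)$, $\theta'(u)=\theta(u)+\theta(v)$, $\theta'(w)=\theta(w)+\theta(v)$, and $\theta'(z)=\theta(z)$ for all other vertices $z$. Then $\nabla(Q,\theta)$ and $\nabla(Q',\theta')$ are integral-affinely equivalent.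
   Context: A quiver $Q$: vertices $Q_0$, arrows $Q_1$, $a$ from $a^-$ to $a^+$. $\nabla(Q,\theta)=\{x\in\mathbb{R}_{\ge0}^{Q_1}\mid\forall v:\ \theta(v)=\sum_{a^+=v}x(a)-\sum_{a^-=v}x(a)\}$. Lattice polyhedra $\nabla_i\subset V_i$ with lattices $M_i$ (here $\mathbb{Z}^{Q_1}$, $\mathbb{Z}^{Q'_1}$) are integral-affinely equivalent if an affine isomorphism $\mathrm{AffSpan}(\nabla_1)\to\mathrm{AffSpan}(\nabla_2)$ maps $\mathrm{AffSpan}(\nabla_1)\cap M_1$ onto $\mathrm{AffSpan}(\nabla_2)\cap M_2$ and $\nabla_1$ onto $\nabla_2$. *)

theory Defs
  imports "HOL-Analysis.Analysis"
begin

text \<open>A quiver with finite vertex type 'v and finite arrow type 'a (all elements of the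
types are vertices/arrows), given by tail and head maps: arrow c goes from src c to tgt c.\<close>

definition nabla :: "('a::finite \<Rightarrow> 'v) \<Rightarrow> ('a \<Rightarrow> 'v) \<Rightarrow> ('v \<Rightarrow> int) \<Rightarrow> (real^'a) set" where
  "nabla src tgt \<theta> = {x. (\<forall>c. x $ c \<ge> 0) \<and>
     (\<forall>z. real_of_int (\<theta> z) = (\<Sum>c\<in>{c. tgt c = z}. x $ c) - (\<Sum>c\<in>{c. src c = z}. x $ c))}"

definition int_vecs :: "(real^'n) set" where
  "int_vecs = {x. \<forall>i. x $ i \<in> \<int>}"

definition int_aff_equiv :: "(real^'n) set \<Rightarrow> (real^'m) set \<Rightarrow> bool" where
  "int_aff_equiv P1 P2 \<longleftrightarrow> (\<exists>f.
      (\<exists>l c. linear l \<and> (\<forall>x\<in>affine hull P1. f x = l x + c)) \<and>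
      bij_betw f (affine hull P1) (affine hull P2) \<and>
      f ` (affine hull P1 \<inter> int_vecs) = affine hull P2 \<inter> int_vecs \<and>
      f ` P1 = P2)"

definition swap_on :: "('a \<Rightarrow> 'v) \<Rightarrow> ('a \<Rightarrow> 'v) \<Rightarrow> 'a set \<Rightarrow> 'a \<Rightarrow> 'v" where
  "swap_on src tgt S c = (if c \<in> S then tgt c else src c)"

end

theory Submission
  imports Defs
begin

definition NF :: "('a::finite \<Rightarrow> 'v) \<Rightarrow> ('a \<Rightarrow> 'v) \<Rightarrow> real^'a \<Rightarrow> 'v \<Rightarrow> real" where
  "NF src tgt x z = (\<Sum>c\<in>{c. tgt c = z}. x $ c) - (\<Sum>c\<in>{c. src c = z}. x $ c)"

lemma nabla_NF: "nabla src tgt \<theta> = {x. (\<forall>c. x $ c \<ge> 0) \<and> (\<forall>z. real_of_int (\<theta> z) = NF src tgt x z)}"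
  unfolding nabla_def NF_def by simp

lemma NF_split:
  fixes src tgt :: "'a::finite \<Rightarrow> 'v"
  assumes "a \<noteq> b"
  shows "NF src tgt x z = (\<Sum>c\<in>UNIV-{a,b}. (if tgt c = z then x$c else 0) - (if src c = z then x$c else 0))
     + ((if tgt a = z then x$a else 0) - (if src a = z then x$a else 0))
     + ((if tgt b = z then x$b else 0) - (if src b = z then x$b else 0))"
proof -
  have e: "\<And>P. {c. P c} = {c\<in>UNIV. P c}" by simp
  have "NF src tgt x z = (\<Sum>c\<in>UNIV. (if tgt c = z then x$c else 0) - (if src c = z then x$c else 0))"
    unfolding NF_def by (subst (1 2) e, simp only: sum.inter_filter[OF finite] sum_subtractf)
  also have "\<dots> = (\<Sum>c\<in>UNIV-{a,b}. (if tgt c = z then x$c else 0) - (if src c = z then x$c else 0))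
     + (\<Sum>c\<in>{a,b}. (if tgt c = z then x$c else 0) - (if src c = z then x$c else 0))"
    by (rule sum.subset_diff) auto
  finally show ?thesis using assms by (simp add: algebra_simps)
qed

theorem proposition4p8:
  fixes src tgt :: "'a::finite \<Rightarrow> 'v::finite" and \<theta> :: "'v \<Rightarrow> int"
    and u v w :: 'v and a b :: 'a
  assumes "nabla src tgt \<theta> \<noteq> {}"
    and "a \<noteq> b"
    and "{c. src c = v \<or> tgt c = v} = {a, b}"
    and "u \<noteq> v" and "v \<noteq> w" and "u \<noteq> w"
    and "(src a = u \<and> tgt a = v \<and> src b = w \<and> tgt b = v) \<or>
         (src a = v \<and> tgt a = u \<and> src b = v \<and> tgt b = w)"
  shows "int_aff_equiv (nabla src tgt \<theta>)
           (nabla (swap_on src tgt {a, b}) (swap_on tgt src {a, b})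
              (\<lambda>z. if z = v then - \<theta> v
                   else if z = u then \<theta> u + \<theta> v
                   else if z = w then \<theta> w + \<theta> v
                   else \<theta> z))"
proof -
  define sw where "sw c = (if c = a then b else if c = b then a else c)" for c
  define f :: "real^'a \<Rightarrow> real^'a" where "f x = (\<chi> c. x $ sw c)" for x
  define src' where "src' = swap_on src tgt {a, b}"
  define tgt' where "tgt' = swap_on tgt src {a, b}"
  define T :: "('v \<Rightarrow> real) \<Rightarrow> 'v \<Rightarrow> real" where
    "T \<phi> z = (if z = v then - \<phi> v else if z = u then \<phi> u + \<phi> v
                   else if z = w then \<phi> w + \<phi> v else \<phi> z)" for \<phi> z
  define \<theta>' where "\<theta>' = (\<lambda>z. if z = v then - \<theta> v
                   else if z = u then \<theta> u + \<theta> v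
                   else if z = w then \<theta> w + \<theta> v
                   else \<theta> z)"
  have swsw: "sw (sw c) = c" for c unfolding sw_def by auto
  have ff: "f (f x) = x" for x unfolding f_def by (simp add: vec_eq_iff swsw)
  have fa: "f x $ a = x $ b" "f x $ b = x $ a" for x unfolding f_def sw_def using assms(2) by auto
  have fc: "c \<notin> {a,b} \<Longrightarrow> f x $ c = x $ c" for c x unfolding f_def sw_def by auto
  have lin: "linear f" unfolding f_def by (rule linearI) (simp_all add: vec_eq_iff)
  have other: "c \<notin> {a,b} \<Longrightarrow> src c \<noteq> v \<and> tgt c \<noteq> v" for c using assms(3) by blast
  have key: "NF src' tgt' (f x) z = T (NF src tgt x) z" for x z
  proof -
    have R: "(\<Sum>c\<in>UNIV-{a,b}. (if tgt' c = z then f x$c else 0) - (if src' c = z then f x$c else 0))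
        = (\<Sum>c\<in>UNIV-{a,b}. (if tgt c = z then x$c else 0) - (if src c = z then x$c else 0))"
      by (rule sum.cong) (auto simp: fc src'_def tgt'_def swap_on_def)
    have R0: "(\<Sum>c\<in>UNIV-{a,b}. (if tgt c = v then x$c else 0) - (if src c = v then x$c else 0)) = 0"
      by (rule sum.neutral) (use other in auto)
    have s': "src' a = tgt a" "src' b = tgt b" "tgt' a = src a" "tgt' b = src b"
      unfolding src'_def tgt'_def swap_on_def by auto
    have L: "NF src' tgt' (f x) z = (\<Sum>c\<in>UNIV-{a,b}. (if tgt c = z then x$c else 0) - (if src c = z then x$c else 0))
     + ((if src a = z then x$b else 0) - (if tgt a = z then x$b else 0))
     + ((if src b = z then x$a else 0) - (if tgt b = z then x$a else 0))"
      unfolding NF_split[OF assms(2), of src' tgt'] R s' fa ..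
    have NV: "NF src tgt x v = ((if tgt a = v then x$a else 0) - (if src a = v then x$a else 0))
     + ((if tgt b = v then x$b else 0) - (if src b = v then x$b else 0))"
      unfolding NF_split[OF assms(2), of src tgt] R0 by simp
    show ?thesis
      unfolding L T_def
      using assms(4-7)
      apply (cases "z = v"; cases "z = u"; cases "z = w")
      apply (simp_all only: NV)
      apply (simp_all only: NF_split[OF assms(2), of src tgt])
      apply (erule disjE; elim conjE; simp add: R0)+
      done
  qed
  have Tinj: "T \<phi> = T \<psi> \<Longrightarrow> \<phi> = \<psi>" for \<phi> \<psi>
  proof
    fix z assume h: "T \<phi> = T \<psi>"
    have hv: "\<phi> v = \<psi> v" using fun_cong[OF h, of v] unfolding T_def by simp
    show "\<phi> z = \<psi> z" using fun_cong[OF h, of z] hv assms(4-6) unfolding T_def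
      by (auto split: if_splits)
  qed
  have Tth: "T (\<lambda>z. real_of_int (\<theta> z)) = (\<lambda>z. real_of_int (\<theta>' z))"
    unfolding T_def \<theta>'_def by auto
  have nonneg: "(\<forall>c. f x $ c \<ge> 0) \<longleftrightarrow> (\<forall>c. x $ c \<ge> 0)" for x
    by (metis ff f_def vec_lambda_beta)
  have img: "f ` nabla src tgt \<theta> = nabla src' tgt' \<theta>'"
  proof
    show "f ` nabla src tgt \<theta> \<subseteq> nabla src' tgt' \<theta>'"
    proof
      fix y assume "y \<in> f ` nabla src tgt \<theta>"
      then obtain x where x: "x \<in> nabla src tgt \<theta>" "y = f x" by auto
      have "NF src tgt x = (\<lambda>z. real_of_int (\<theta> z))" using x(1) unfolding nabla_NF by auto
      hence "NF src' tgt' y = (\<lambda>z. real_of_int (\<theta>' z))" using key x(2) Tth by auto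
      thus "y \<in> nabla src' tgt' \<theta>'" using x nonneg unfolding nabla_NF by auto
    qed
  next
    show "nabla src' tgt' \<theta>' \<subseteq> f ` nabla src tgt \<theta>"
    proof
      fix y assume y: "y \<in> nabla src' tgt' \<theta>'"
      have "T (NF src tgt (f y)) = NF src' tgt' y" using key[of "f y"] ff by auto
      also have "\<dots> = T (\<lambda>z. real_of_int (\<theta> z))" using y Tth unfolding nabla_NF by auto
      finally have "NF src tgt (f y) = (\<lambda>z. real_of_int (\<theta> z))" by (rule Tinj)
      hence "f y \<in> nabla src tgt \<theta>" using y nonneg[of "f y"] ff unfolding nabla_NF by auto
      thus "y \<in> f ` nabla src tgt \<theta>" using ff by (metis image_eqI)
    qed
  qed
  have injf: "inj f" by (metis ff injI)
  have bl: "bounded_linear f" using lin linear_conv_bounded_linear by blast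
  have ah: "f ` (affine hull nabla src tgt \<theta>) = affine hull nabla src' tgt' \<theta>'"
    using affine_hull_linear_image[OF bl] img by simp
  have fI: "f ` int_vecs = int_vecs"
  proof
    show "f ` int_vecs \<subseteq> int_vecs" unfolding int_vecs_def f_def by auto
    show "int_vecs \<subseteq> f ` int_vecs"
    proof
      fix x :: "real^'a" assume "x \<in> int_vecs"
      hence "f x \<in> int_vecs" unfolding int_vecs_def f_def by auto
      thus "x \<in> f ` int_vecs" using ff by (metis image_eqI)
    qed
  qed
  have "int_aff_equiv (nabla src tgt \<theta>) (nabla src' tgt' \<theta>')"
    unfolding int_aff_equiv_def
  proof (rule exI[of _ f], intro conjI)
    show "\<exists>l c. linear l \<and> (\<forall>x\<in>affine hull nabla src tgt \<theta>. f x = l x + c)"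
      using lin by (intro exI[of _ f] exI[of _ 0]) simp
    show "bij_betw f (affine hull nabla src tgt \<theta>) (affine hull nabla src' tgt' \<theta>')"
      using ah injf by (simp add: bij_betw_def inj_on_subset[OF injf])
    show "f ` (affine hull nabla src tgt \<theta> \<inter> int_vecs) = affine hull nabla src' tgt' \<theta>' \<inter> int_vecs"
      using image_Int[OF injf] ah fI by metis
    show "f ` nabla src tgt \<theta> = nabla src' tgt' \<theta>'" by (rule img)
  qed
  thus ?thesis unfolding src'_def tgt'_def \<theta>'_def .
qed

end
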